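(* Let $(M,d)$ be a complete pointed metric space and $f\in\mathrm{Lip}_0(M,M)$, and assume there is $v\in\mathrm{span}(\delta(M))\cap A_{\widehat f}$. Then $A_{\widehat f}$ is dense in $\mathcal F(M)$. In particular, this holds if $\mathrm{int}(A_{\widehat f})\neq\emptyset$ or if there is $x\in M$ with $d(0,f^n(x))\to\infty$.
   Context: A pointed metric space is a metric space with a distinguished point $0$. $\mathrm{Lip}_0(M,M)$ denotes the Lipschitz maps $f:M\to M$ with $f(0)=0$; $\mathrm{Lip}_0(M)$ the real-valued Lipschitz functions vanishing at $0$ normed by the Lipschitz constant. $\delta:M\to\mathrm{Lip}_0(M)^*$, $\delta(x)(\varphi)=\varphi(x)$; $\mathcal F(M)$ is the norm-closed linear span of $\delta(M)$. $\widehat f$ is the unique bounded linear operator on $\mathcal F(M)$ with $\widehat f(\delta(x))=\delta(f(x))$. For an operator $T$, $A_T=\{\mu:\lim_n\|T^n\mu\|=\infty\}$. *)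

theory Defs
  imports "HOL-Analysis.Analysis"
begin

text \<open>Elements of Lip_0(M)^* are represented as functions (('a => real) => real),
  required to vanish outside Lip_0(M) (extensionality), so that they are
  determined by their values on Lip_0(M).\<close>

definition Lip0 :: "'a::metric_space \<Rightarrow> ('a \<Rightarrow> real) set" where
  "Lip0 z = {\<phi>. \<phi> z = 0 \<and> (\<exists>L. L-lipschitz_on UNIV \<phi>)}"

definition LipBall :: "'a::metric_space \<Rightarrow> ('a \<Rightarrow> real) set" where
  "LipBall z = {\<phi>. \<phi> z = 0 \<and> 1-lipschitz_on UNIV \<phi>}"

definition dnorm :: "'a::metric_space \<Rightarrow> (('a \<Rightarrow> real) \<Rightarrow> real) \<Rightarrow> real" where
  "dnorm z \<mu> = (SUP \<phi>\<in>LipBall z. \<bar>\<mu> \<phi>\<bar>)"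

definition delta :: "'a::metric_space \<Rightarrow> 'a \<Rightarrow> ('a \<Rightarrow> real) \<Rightarrow> real" where
  "delta z x = (\<lambda>\<phi>. if \<phi> \<in> Lip0 z then \<phi> x else 0)"

definition span_delta :: "'a::metric_space \<Rightarrow> (('a \<Rightarrow> real) \<Rightarrow> real) set" where
  "span_delta z = {\<mu>. \<exists>S a. finite S \<and> \<mu> = (\<lambda>\<phi>. \<Sum>x\<in>S. a x * delta z x \<phi>)}"

definition Free :: "'a::metric_space \<Rightarrow> (('a \<Rightarrow> real) \<Rightarrow> real) set" where
  "Free z = {\<mu>. (\<forall>\<phi>. \<phi> \<notin> Lip0 z \<longrightarrow> \<mu> \<phi> = 0) \<and>
     (\<forall>e>0. \<exists>\<nu>\<in>span_delta z. \<forall>\<phi>\<in>LipBall z. \<bar>\<mu> \<phi> - \<nu> \<phi>\<bar> \<le> e)}"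

definition is_lin_hat :: "'a::metric_space \<Rightarrow> ('a \<Rightarrow> 'a)
    \<Rightarrow> ((('a \<Rightarrow> real) \<Rightarrow> real) \<Rightarrow> (('a \<Rightarrow> real) \<Rightarrow> real)) \<Rightarrow> bool" where
  "is_lin_hat z f T \<longleftrightarrow>
     (\<forall>\<mu>\<in>Free z. T \<mu> \<in> Free z) \<and>
     (\<forall>\<mu>\<in>Free z. \<forall>\<nu>\<in>Free z. T (\<lambda>\<phi>. \<mu> \<phi> + \<nu> \<phi>) = (\<lambda>\<phi>. T \<mu> \<phi> + T \<nu> \<phi>)) \<and>
     (\<forall>\<mu>\<in>Free z. \<forall>c::real. T (\<lambda>\<phi>. c * \<mu> \<phi>) = (\<lambda>\<phi>. c * T \<mu> \<phi>)) \<and>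
     (\<exists>C. \<forall>\<mu>\<in>Free z. dnorm z (T \<mu>) \<le> C * dnorm z \<mu>) \<and>
     (\<forall>x. T (delta z x) = delta z (f x))"

definition A_set :: "'a::metric_space \<Rightarrow> ((('a \<Rightarrow> real) \<Rightarrow> real) \<Rightarrow> (('a \<Rightarrow> real) \<Rightarrow> real))
    \<Rightarrow> (('a \<Rightarrow> real) \<Rightarrow> real) set" where
  "A_set z T = {\<mu>\<in>Free z. filterlim (\<lambda>n. dnorm z ((T ^^ n) \<mu>)) at_top sequentially}"

end

theory Submission
  imports Defs
begin


lemma LipBall_Lip0: "\<phi> \<in> LipBall z \<Longrightarrow> \<phi> \<in> Lip0 z"
  unfolding LipBall_def Lip0_def by auto

lemma LipBall_lip: "\<phi> \<in> LipBall z \<Longrightarrow> \<bar>\<phi> x - \<phi> y\<bar> \<le> dist x y"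
  unfolding LipBall_def using lipschitz_onD[of 1 UNIV \<phi> x y] by (auto simp: dist_real_def)

lemma LipBall_bound: "\<phi> \<in> LipBall z \<Longrightarrow> \<bar>\<phi> x\<bar> \<le> dist x z"
  using LipBall_lip[of \<phi> z x z] by (simp add: LipBall_def)

lemma LipBall_zero: "(\<lambda>_. 0) \<in> LipBall z"
  unfolding LipBall_def by (auto simp: lipschitz_on_def)

lemma delta_app: "\<phi> \<in> LipBall z \<Longrightarrow> delta z x \<phi> = \<phi> x"
  using LipBall_Lip0 unfolding delta_def by auto

lemma dnorm_ge: "bdd_above ((\<lambda>\<phi>. \<bar>\<mu> \<phi>\<bar>) ` LipBall z) \<Longrightarrow> \<phi> \<in> LipBall z \<Longrightarrow> \<bar>\<mu> \<phi>\<bar> \<le> dnorm z \<mu>"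
  unfolding dnorm_def by (rule cSUP_upper)

lemma dnorm_le: "(\<And>\<phi>. \<phi> \<in> LipBall z \<Longrightarrow> \<bar>\<mu> \<phi>\<bar> \<le> B) \<Longrightarrow> dnorm z \<mu> \<le> B"
  unfolding dnorm_def using LipBall_zero by (intro cSUP_least) auto

lemma sum_bdd:
  assumes "finite S"
  shows "bdd_above ((\<lambda>\<phi>. \<bar>\<Sum>x\<in>S. c x * delta z (q x) \<phi>\<bar>) ` LipBall z)"
proof (rule bdd_aboveI2)
  fix \<phi> assume ph: "\<phi> \<in> LipBall z"
  have "\<bar>\<Sum>x\<in>S. c x * delta z (q x) \<phi>\<bar> \<le> (\<Sum>x\<in>S. \<bar>c x * delta z (q x) \<phi>\<bar>)"
    by (rule sum_abs)
  also have "\<dots> \<le> (\<Sum>x\<in>S. \<bar>c x\<bar> * dist (q x) z)"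
    by (intro sum_mono) (simp add: abs_mult delta_app[OF ph] LipBall_bound[OF ph] mult_left_mono)
  finally show "\<bar>\<Sum>x\<in>S. c x * delta z (q x) \<phi>\<bar> \<le> (\<Sum>x\<in>S. \<bar>c x\<bar> * dist (q x) z)" .
qed

lemma sum_span:
  assumes "finite S"
  shows "(\<lambda>\<phi>. \<Sum>x\<in>S. c x * delta z (q x) \<phi>) \<in> span_delta z"
proof -
  have "(\<lambda>\<phi>. \<Sum>x\<in>S. c x * delta z (q x) \<phi>) =
        (\<lambda>\<phi>. \<Sum>y\<in>q ` S. (\<Sum>x\<in>{x\<in>S. q x = y}. c x) * delta z y \<phi>)"
  proof
    fix \<phi>
    have "(\<Sum>x\<in>S. c x * delta z (q x) \<phi>) = (\<Sum>y\<in>q ` S. \<Sum>x\<in>{x\<in>S. q x = y}. c x * delta z (q x) \<phi>)"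
      by (rule sum.image_gen[OF assms])
    also have "\<dots> = (\<Sum>y\<in>q ` S. (\<Sum>x\<in>{x\<in>S. q x = y}. c x) * delta z y \<phi>)"
      by (intro sum.cong refl) (simp add: sum_distrib_right)
    finally show "(\<Sum>x\<in>S. c x * delta z (q x) \<phi>) = (\<Sum>y\<in>q ` S. (\<Sum>x\<in>{x\<in>S. q x = y}. c x) * delta z y \<phi>)" .
  qed
  then show ?thesis unfolding span_delta_def
    by (intro CollectI exI[of _ "q ` S"] exI[of _ "\<lambda>y. \<Sum>x\<in>{x\<in>S. q x = y}. c x"] conjI finite_imageI assms)
qed

lemma span_Free:
  assumes mu: "\<mu> \<in> span_delta z"
  shows "\<mu> \<in> Free z"
proof -
  obtain S a where mu': "\<mu> = (\<lambda>\<phi>. \<Sum>x\<in>S. a x * delta z x \<phi>)"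
    using mu unfolding span_delta_def by blast
  have 1: "\<forall>\<phi>. \<phi> \<notin> Lip0 z \<longrightarrow> \<mu> \<phi> = 0" unfolding mu' delta_def by simp
  have 2: "\<forall>e>0. \<exists>\<nu>\<in>span_delta z. \<forall>\<phi>\<in>LipBall z. \<bar>\<mu> \<phi> - \<nu> \<phi>\<bar> \<le> e"
    using mu by (intro allI impI bexI[of _ \<mu>]) auto
  show ?thesis unfolding Free_def using 1 2 by blast
qed

lemma sum_Free: "finite S \<Longrightarrow> (\<lambda>\<phi>. \<Sum>x\<in>S. c x * delta z (q x) \<phi>) \<in> Free z"
  using sum_span span_Free by blast

lemma T_sum:
  assumes lin: "is_lin_hat z f T" and fin: "finite S"
  shows "T (\<lambda>\<phi>. \<Sum>x\<in>S. c x * delta z (q x) \<phi>) = (\<lambda>\<phi>. \<Sum>x\<in>S. c x * delta z (f (q x)) \<phi>)"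
  using fin
proof (induction S rule: finite_induct)
  case empty
  have d: "delta z z \<in> Free z" using sum_Free[of "{z}" "\<lambda>_. 1" z id] by simp
  have "T (\<lambda>\<phi>. 0 * delta z z \<phi>) = (\<lambda>\<phi>. 0 * T (delta z z) \<phi>)"
    using lin d unfolding is_lin_hat_def by blast
  then show ?case by simp
next
  case (insert k S)
  have d: "(\<lambda>\<phi>. c k * delta z (q k) \<phi>) \<in> Free z"
    using sum_Free[of "{k}" c z q] by simp
  have dk: "delta z (q k) \<in> Free z" using sum_Free[of "{k}" "\<lambda>_. 1" z q] by simp
  have s: "(\<lambda>\<phi>. \<Sum>x\<in>S. c x * delta z (q x) \<phi>) \<in> Free z" using sum_Free insert by blast
  have add: "\<And>\<mu> \<nu>. \<mu> \<in> Free z \<Longrightarrow> \<nu> \<in> Free z \<Longrightarrow> T (\<lambda>\<phi>. \<mu> \<phi> + \<nu> \<phi>) = (\<lambda>\<phi>. T \<mu> \<phi> + T \<nu> \<phi>)"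
    using lin unfolding is_lin_hat_def by blast
  have "T (\<lambda>\<phi>. \<Sum>x\<in>insert k S. c x * delta z (q x) \<phi>) =
     (\<lambda>\<phi>. T (\<lambda>\<phi>. c k * delta z (q k) \<phi>) \<phi> + T (\<lambda>\<phi>. \<Sum>x\<in>S. c x * delta z (q x) \<phi>) \<phi>)"
    using add[OF d s] insert by simp
  moreover have "T (\<lambda>\<phi>. c k * delta z (q k) \<phi>) = (\<lambda>\<phi>. c k * delta z (f (q k)) \<phi>)"
    using lin dk unfolding is_lin_hat_def by auto
  ultimately show ?case using insert by simp
qed

lemma T_pow_sum:
  assumes lin: "is_lin_hat z f T" and fin: "finite S"
  shows "(T ^^ n) (\<lambda>\<phi>. \<Sum>x\<in>S. c x * delta z (q x) \<phi>) = (\<lambda>\<phi>. \<Sum>x\<in>S. c x * delta z ((f ^^ n) (q x)) \<phi>)"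
proof (induction n)
  case 0 then show ?case by simp
next
  case (Suc n)
  show ?case using T_sum[OF lin fin, of c "\<lambda>x. (f ^^ n) (q x)"] Suc by simp
qed

lemma gap:
  fixes R :: real
  assumes "finite D" "card D \<le> m" "R > 0"
  shows "\<exists>i\<le>m. \<forall>d\<in>D. \<not> (2^i*R < d \<and> d \<le> 2^(Suc i)*R)"
proof (rule ccontr)
  assume "\<not> ?thesis"
  then have "\<forall>i\<in>{..m}. \<exists>d. d \<in> D \<and> 2^i*R < d \<and> d \<le> 2^(Suc i)*R" by auto
  then obtain g where g: "\<And>i. i \<in> {..m} \<Longrightarrow> g i \<in> D \<and> 2^i*R < g i \<and> g i \<le> 2^(Suc i)*R"
    by metis
  have inj: "inj_on g {..m}"
  proof (rule inj_onI)
    fix i j assume i: "i \<in> {..m}" and j: "j \<in> {..m}" and eq: "g i = g j"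
    show "i = j"
    proof (rule ccontr)
      assume "i \<noteq> j"
      then consider "i < j" | "j < i" by linarith
      then show False
      proof cases
        case 1
        then have "(2::real)^(Suc i) \<le> 2^j" by (intro power_increasing) auto
        then have "2^(Suc i)*R \<le> 2^j*R" using assms(3) by simp
        then show False using g[OF i] g[OF j] eq by linarith
      next
        case 2
        then have "(2::real)^(Suc j) \<le> 2^i" by (intro power_increasing) auto
        then have "2^(Suc j)*R \<le> 2^i*R" using assms(3) by simp
        then show False using g[OF i] g[OF j] eq by linarith
      qed
    qed
  qed
  have "card {..m} \<le> card D"
    by (rule card_inj_on_le[OF inj]) (use g assms(1) in auto)
  then show False using assms(2) by simp
qed



lemma clamp_lip: fixes r s a b :: real shows "\<bar>min r (max 0 (s - a)) - min r (max 0 (s - b))\<bar> \<le> \<bar>a - b\<bar>"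
  by (simp add: min_def max_def abs_if)


lemma key:
  fixes z :: "'a::metric_space" and p :: "'a \<Rightarrow> 'a" and R \<kappa> :: real
  assumes fin: "finite S" and R: "R > 0" and kp: "\<kappa> > 0"
    and hk: "\<And>C. C \<subseteq> S \<Longrightarrow> (\<Sum>k\<in>C. b k) \<noteq> 0 \<Longrightarrow> \<kappa> \<le> \<bar>\<Sum>k\<in>C. c k\<bar>"
  shows "\<kappa> * R \<le> dnorm z (\<lambda>\<phi>. \<Sum>k\<in>S. c k * delta z (p k) \<phi>) \<or>
         dnorm z (\<lambda>\<phi>. \<Sum>k\<in>S. b k * delta z (p k) \<phi>) \<le> 2^((card S + 1)^2) * R * (\<Sum>k\<in>S. \<bar>b k\<bar>)"
proof -
  define P where "P = insert z (p ` S)"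
  define D where "D = (\<lambda>(x,y). dist x y) ` (P \<times> P)"
  define m where "m = (card S + 1)^2"
  have finP: "finite P" using fin by (simp add: P_def)
  have finD: "finite D" using finP by (simp add: D_def)
  have cP: "card P \<le> card S + 1"
  proof -
    have "card P \<le> Suc (card (p ` S))" unfolding P_def by (simp add: card_insert_le_m1 card_insert_if)
    moreover have "card (p ` S) \<le> card S" by (rule card_image_le[OF fin])
    ultimately show ?thesis by simp
  qed
  have "card D \<le> card (P \<times> P)" unfolding D_def by (rule card_image_le) (use finP in simp)
  also have "\<dots> = card P * card P" by (simp add: card_cartesian_product)
  also have "\<dots> \<le> m" unfolding m_def power2_eq_square using cP by (intro mult_le_mono) auto
  finally have cD: "card D \<le> m" .
  obtain i where im: "i \<le> m" and gi: "\<forall>d\<in>D. \<not> (2^i*R < d \<and> d \<le> 2^(Suc i)*R)"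
    using gap[OF finD cD R] by blast
  define r where "r = 2^i * R"
  have rpos: "r > 0" using R by (simp add: r_def)
  have rR: "R \<le> r" unfolding r_def using R by simp
  have rm: "r \<le> 2^m * R" unfolding r_def using R im by (simp add: power_increasing)
  have gp: "dist x y \<le> r" if "x \<in> P" "y \<in> P" "dist x y \<le> 2*r" for x y
  proof -
    have "dist x y \<in> D" unfolding D_def using that by force
    then show ?thesis using gi that unfolding r_def by force
  qed
  have zP: "z \<in> P" and pP: "\<And>k. k \<in> S \<Longrightarrow> p k \<in> P" by (auto simp: P_def)
  show ?thesis
  proof (cases "\<exists>j\<in>S. dist (p j) z > r \<and> (\<Sum>k\<in>{k\<in>S. dist (p j) (p k) \<le> r}. b k) \<noteq> 0")
    case True
    then obtain j where j: "j \<in> S" "dist (p j) z > r"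
      and sb: "(\<Sum>k\<in>{k\<in>S. dist (p j) (p k) \<le> r}. b k) \<noteq> 0" by blast
    define C where "C = {k\<in>S. dist (p j) (p k) \<le> r}"
    have kap: "\<kappa> \<le> \<bar>\<Sum>k\<in>C. c k\<bar>" using hk[of C] sb unfolding C_def by auto
    define \<phi> where "\<phi> = (\<lambda>y. min r (max 0 (2*r - dist y (p j))))"
    have far: "dist z (p j) > 2*r"
    proof (rule ccontr)
      assume "\<not> ?thesis"
      then have "dist z (p j) \<le> r" using gp[OF zP pP[OF j(1)]] by linarith
      then show False using j(2) by (simp add: dist_commute)
    qed
    have ph: "\<phi> \<in> LipBall z"
      unfolding LipBall_def
    proof safe
      show "\<phi> z = 0" unfolding \<phi>_def using far rpos by simp
      show "1-lipschitz_on UNIV \<phi>"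
      proof (rule lipschitz_onI)
        fix x y :: 'a
        have "\<bar>dist x (p j) - dist y (p j)\<bar> \<le> dist x y"
          using abs_dist_diff_le[of x "p j" y] by (simp add: dist_commute)
        then show "dist (\<phi> x) (\<phi> y) \<le> 1 * dist x y"
          unfolding \<phi>_def dist_real_def using clamp_lip[of r "2*r" "dist x (p j)" "dist y (p j)"] by linarith
      qed simp
    qed
    have val: "(\<Sum>k\<in>S. c k * delta z (p k) \<phi>) = r * (\<Sum>k\<in>C. c k)"
    proof -
      have "(\<Sum>k\<in>S. c k * delta z (p k) \<phi>) = (\<Sum>k\<in>S. if k \<in> C then c k * r else 0)"
      proof (intro sum.cong refl)
        fix k assume k: "k \<in> S"
        show "c k * delta z (p k) \<phi> = (if k \<in> C then c k * r else 0)"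
        proof (cases "k \<in> C")
          case True
          then have "dist (p k) (p j) \<le> r" by (simp add: C_def dist_commute)
          then show ?thesis using True delta_app[OF ph] unfolding \<phi>_def by simp
        next
          case False
          then have "dist (p k) (p j) > r" using k by (simp add: C_def dist_commute)
          then have "dist (p k) (p j) > 2*r" using gp[OF pP[OF k] pP[OF j(1)]] by linarith
          then show ?thesis using False delta_app[OF ph] rpos unfolding \<phi>_def by simp
        qed
      qed
      also have "\<dots> = (\<Sum>k\<in>C. c k * r)"
        using fin by (simp add: sum.If_cases C_def Int_def)
      finally show ?thesis by (simp add: sum_distrib_left mult.commute)
    qed
    have "\<kappa> * R \<le> r * \<bar>\<Sum>k\<in>C. c k\<bar>"
    proof -
      have "\<kappa> * R \<le> \<bar>\<Sum>k\<in>C. c k\<bar> * r" using mult_mono[OF kap rR] kp R by simp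
      then show ?thesis by (simp add: mult.commute)
    qed
    also have "\<dots> = \<bar>\<Sum>k\<in>S. c k * delta z (p k) \<phi>\<bar>" using val rpos by (simp add: abs_mult)
    also have "\<dots> \<le> dnorm z (\<lambda>\<phi>. \<Sum>k\<in>S. c k * delta z (p k) \<phi>)"
      using dnorm_ge[OF sum_bdd[OF fin] ph, of c p] by simp
    finally show ?thesis by simp
  next
    case False
    then have zero: "\<And>j. j \<in> S \<Longrightarrow> dist (p j) z > r \<Longrightarrow> (\<Sum>k\<in>{k\<in>S. dist (p j) (p k) \<le> r}. b k) = 0"
      by blast
    define F where "F = {k\<in>S. dist (p k) z > r}"
    define rep where "rep = (\<lambda>k. SOME j. j \<in> S \<and> dist (p j) (p k) \<le> r)"
    have rep: "rep k \<in> S \<and> dist (p (rep k)) (p k) \<le> r" if "k \<in> S" for k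
      unfolding rep_def by (rule someI[of _ k]) (use that rpos in simp)
    have bnd: "\<bar>\<Sum>k\<in>S. b k * delta z (p k) \<phi>\<bar> \<le> r * (\<Sum>k\<in>S. \<bar>b k\<bar>)" if ph: "\<phi> \<in> LipBall z" for \<phi>
    proof -
      define g where "g = (\<lambda>k. if k \<in> F then \<phi> (p (rep k)) else 0)"
      have sg: "(\<Sum>k\<in>S. b k * g k) = 0"
      proof -
        have "(\<Sum>k\<in>S. b k * g k) = (\<Sum>k\<in>F. b k * \<phi> (p (rep k)))"
          unfolding g_def F_def using fin by (simp add: sum.If_cases if_distrib Int_def)
        also have "\<dots> = (\<Sum>j\<in>rep ` F. \<Sum>k\<in>{k\<in>F. rep k = j}. b k * \<phi> (p (rep k)))"
          by (rule sum.image_gen) (use fin in \<open>simp add: F_def\<close>)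
        also have "\<dots> = 0"
        proof (rule sum.neutral, rule ballI)
          fix j assume "j \<in> rep ` F"
          then obtain k0 where k0: "k0 \<in> F" "j = rep k0" by blast
          have k0S: "k0 \<in> S" using k0 by (simp add: F_def)
          have seteq: "{k\<in>F. rep k = j} = {k\<in>S. dist (p k0) (p k) \<le> r}"
          proof (intro equalityI subsetI)
            fix k assume "k \<in> {k\<in>F. rep k = j}"
            then have k: "k \<in> F" "rep k = j" by auto
            have kS: "k \<in> S" using k by (simp add: F_def)
            have "dist (p k0) (p k) \<le> dist (p (rep k0)) (p k0) + dist (p (rep k0)) (p k)"
              by (rule dist_triangle3)
            then have "dist (p k0) (p k) \<le> 2*r" using rep[OF k0S] rep[OF kS] k k0 by simp
            then have "dist (p k0) (p k) \<le> r" using gp pP k0S kS by blast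
            then show "k \<in> {k\<in>S. dist (p k0) (p k) \<le> r}" using kS by simp
          next
            fix k assume "k \<in> {k\<in>S. dist (p k0) (p k) \<le> r}"
            then have kS: "k \<in> S" and d: "dist (p k0) (p k) \<le> r" by auto
            have kF: "k \<in> F"
            proof (rule ccontr)
              assume "k \<notin> F"
              then have "dist (p k) z \<le> r" using kS by (simp add: F_def)
              then have "dist (p k0) z \<le> 2*r" using d dist_triangle[of "p k0" z "p k"] by simp
              then have "dist (p k0) z \<le> r" using gp pP[OF k0S] zP by blast
              then show False using k0 by (simp add: F_def)
            qed
            have "(\<lambda>j'. j' \<in> S \<and> dist (p j') (p k) \<le> r) = (\<lambda>j'. j' \<in> S \<and> dist (p j') (p k0) \<le> r)"
            proof -
              have 1: "dist (p j') (p k0) \<le> r" if a: "j' \<in> S" "dist (p j') (p k) \<le> r" for j'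
              proof -
                have "dist (p j') (p k0) \<le> 2*r" using d a dist_triangle[of "p j'" "p k0" "p k"]
                  by (simp add: dist_commute)
                then show ?thesis using gp pP a k0S by blast
              qed
              have 2: "dist (p j') (p k) \<le> r" if a: "j' \<in> S" "dist (p j') (p k0) \<le> r" for j'
              proof -
                have "dist (p j') (p k) \<le> 2*r" using d a dist_triangle[of "p j'" "p k" "p k0"]
                  by simp
                then show ?thesis using gp pP a kS by blast
              qed
              show ?thesis using 1 2 by (intro ext) blast
            qed
            then have "rep k = j" unfolding k0 rep_def by simp
            then show "k \<in> {k\<in>F. rep k = j}" using kF by simp
          qed
          have "(\<Sum>k\<in>{k\<in>F. rep k = j}. b k * \<phi> (p (rep k))) = (\<Sum>k\<in>{k\<in>F. rep k = j}. b k) * \<phi> (p j)"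
            by (simp add: sum_distrib_right)
          also have "\<dots> = 0" using seteq zero[OF k0S] k0 by (simp add: F_def)
          finally show "(\<Sum>k\<in>{k\<in>F. rep k = j}. b k * \<phi> (p (rep k))) = 0" .
        qed
        finally show ?thesis .
      qed
      have "(\<Sum>k\<in>S. b k * delta z (p k) \<phi>) = (\<Sum>k\<in>S. b k * (\<phi> (p k) - g k)) + (\<Sum>k\<in>S. b k * g k)"
        by (simp add: delta_app[OF ph] sum.distrib[symmetric] algebra_simps)
      also have "\<dots> = (\<Sum>k\<in>S. b k * (\<phi> (p k) - g k))" using sg by simp
      finally have "\<bar>\<Sum>k\<in>S. b k * delta z (p k) \<phi>\<bar> = \<bar>\<Sum>k\<in>S. b k * (\<phi> (p k) - g k)\<bar>" by simp
      also have "\<dots> \<le> (\<Sum>k\<in>S. \<bar>b k * (\<phi> (p k) - g k)\<bar>)" by (rule sum_abs)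
      also have "\<dots> \<le> (\<Sum>k\<in>S. \<bar>b k\<bar> * r)"
      proof (intro sum_mono)
        fix k assume kS: "k \<in> S"
        have "\<bar>\<phi> (p k) - g k\<bar> \<le> r"
        proof (cases "k \<in> F")
          case True
          then have "\<bar>\<phi> (p k) - g k\<bar> = \<bar>\<phi> (p k) - \<phi> (p (rep k))\<bar>" by (simp add: g_def)
          also have "\<dots> \<le> dist (p k) (p (rep k))" by (rule LipBall_lip[OF ph])
          also have "\<dots> \<le> r" using rep[OF kS] by (simp add: dist_commute)
          finally show ?thesis .
        next
          case False
          then have "\<bar>\<phi> (p k) - g k\<bar> = \<bar>\<phi> (p k)\<bar>" by (simp add: g_def)
          also have "\<dots> \<le> dist (p k) z" by (rule LipBall_bound[OF ph])
          also have "\<dots> \<le> r" using False kS by (simp add: F_def)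
          finally show ?thesis .
        qed
        then show "\<bar>b k * (\<phi> (p k) - g k)\<bar> \<le> \<bar>b k\<bar> * r"
          by (simp add: abs_mult mult_left_mono)
      qed
      also have "\<dots> = r * (\<Sum>k\<in>S. \<bar>b k\<bar>)" by (simp add: sum_distrib_left mult.commute)
      finally show ?thesis .
    qed
    have "dnorm z (\<lambda>\<phi>. \<Sum>k\<in>S. b k * delta z (p k) \<phi>) \<le> r * (\<Sum>k\<in>S. \<bar>b k\<bar>)"
      by (rule dnorm_le) (use bnd in simp)
    also have "\<dots> \<le> 2^m * R * (\<Sum>k\<in>S. \<bar>b k\<bar>)"
      by (rule mult_right_mono[OF rm]) (simp add: sum_nonneg)
    finally show ?thesis unfolding m_def by simp
  qed
qed



lemma part1:
  fixes z :: "'a::metric_space"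
  assumes lin: "is_lin_hat z f T" and vs: "v \<in> span_delta z" and vA: "v \<in> A_set z T"
    and mu: "\<mu> \<in> Free z" and e: "e > 0"
  shows "\<exists>\<nu>\<in>A_set z T. dnorm z (\<lambda>\<phi>. \<nu> \<phi> - \<mu> \<phi>) < e"
proof -
  have FF: "\<forall>e>0. \<exists>\<nu>\<in>span_delta z. \<forall>\<phi>\<in>LipBall z. \<bar>\<mu> \<phi> - \<nu> \<phi>\<bar> \<le> e"
    using mu unfolding Free_def by blast
  have e3: "e/3 > 0" using e by simp
  obtain u where us: "u \<in> span_delta z" and hu0: "\<forall>\<phi>\<in>LipBall z. \<bar>\<mu> \<phi> - u \<phi>\<bar> \<le> e/3"
    using FF[rule_format, OF e3] by blast
  have hu: "\<And>\<phi>. \<phi> \<in> LipBall z \<Longrightarrow> \<bar>\<mu> \<phi> - u \<phi>\<bar> \<le> e/3" using hu0 by blast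
  obtain S1 a' where S1: "finite S1" and u: "u = (\<lambda>\<phi>. \<Sum>x\<in>S1. a' x * delta z x \<phi>)"
    using us unfolding span_delta_def by blast
  obtain S2 b' where S2: "finite S2" and v: "v = (\<lambda>\<phi>. \<Sum>x\<in>S2. b' x * delta z x \<phi>)"
    using vs unfolding span_delta_def by blast
  define S where "S = S1 \<union> S2"
  define a where "a = (\<lambda>x. if x \<in> S1 then a' x else 0)"
  define b where "b = (\<lambda>x. if x \<in> S2 then b' x else 0)"
  have fin: "finite S" using S1 S2 by (simp add: S_def)
  have u2: "u = (\<lambda>\<phi>. \<Sum>x\<in>S. a x * delta z x \<phi>)"
  proof
    fix \<phi>
    have "(\<Sum>x\<in>S. a x * delta z x \<phi>) = (\<Sum>x\<in>S1. a x * delta z x \<phi>)"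
      by (rule sum.mono_neutral_right) (auto simp: S_def a_def fin S1 S2)
    then show "u \<phi> = (\<Sum>x\<in>S. a x * delta z x \<phi>)" by (simp add: u a_def)
  qed
  have v2: "v = (\<lambda>\<phi>. \<Sum>x\<in>S. b x * delta z x \<phi>)"
  proof
    fix \<phi>
    have "(\<Sum>x\<in>S. b x * delta z x \<phi>) = (\<Sum>x\<in>S2. b x * delta z x \<phi>)"
      by (rule sum.mono_neutral_right) (auto simp: S_def b_def fin S1 S2)
    then show "v \<phi> = (\<Sum>x\<in>S. b x * delta z x \<phi>)" by (simp add: v b_def)
  qed
  define V where "V = dnorm z v"
  have vbdd: "bdd_above ((\<lambda>\<phi>. \<bar>v \<phi>\<bar>) ` LipBall z)"
    using sum_bdd[OF fin, of b z id] v2 by simp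
  have vle: "\<And>\<phi>. \<phi> \<in> LipBall z \<Longrightarrow> \<bar>v \<phi>\<bar> \<le> V"
    unfolding V_def by (rule dnorm_ge[OF vbdd])
  have V0: "V \<ge> 0" using vle[OF LipBall_zero] by (meson abs_ge_zero order_trans)
  define Bad where "Bad = (\<lambda>C. - (\<Sum>k\<in>C. a k) / (\<Sum>k\<in>C. b k)) ` {C. C \<subseteq> S}"
  have finBad: "finite Bad" unfolding Bad_def using fin by simp
  define \<delta> where "\<delta> = e / (3 * (V + 1))"
  have dpos: "\<delta> > 0" unfolding \<delta>_def using e V0 by simp
  have "infinite ({0<..<\<delta>} - Bad)" by (rule Diff_infinite_finite[OF finBad]) (simp add: dpos)
  then obtain t where t: "t \<in> {0<..<\<delta>}" "t \<notin> Bad"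
    using infinite_imp_nonempty by blast
  have tpos: "t > 0" and td: "t < \<delta>" using t by auto
  have tV: "t * V \<le> e/3"
  proof -
    have "t * V \<le> \<delta> * (V + 1)" using tpos td V0 by (intro mult_mono) auto
    also have "\<dots> = e / 3" unfolding \<delta>_def using V0 by (simp add: field_simps)
    finally show ?thesis .
  qed
  define c where "c = (\<lambda>x. a x + t * b x)"
  define \<nu> where "\<nu> = (\<lambda>\<phi>. \<Sum>x\<in>S. c x * delta z x \<phi>)"
  have nu_eq: "\<nu> \<phi> = u \<phi> + t * v \<phi>" for \<phi>
    unfolding \<nu>_def u2 v2 c_def by (simp add: algebra_simps sum.distrib sum_distrib_left)
  have nuF: "\<nu> \<in> Free z" unfolding \<nu>_def using sum_Free[OF fin, of c z id] by simp
  have close: "dnorm z (\<lambda>\<phi>. \<nu> \<phi> - \<mu> \<phi>) < e"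
  proof -
    have "dnorm z (\<lambda>\<phi>. \<nu> \<phi> - \<mu> \<phi>) \<le> e/3 + e/3"
    proof (rule dnorm_le)
      fix \<phi> assume ph: "\<phi> \<in> LipBall z"
      have "\<bar>\<nu> \<phi> - \<mu> \<phi>\<bar> \<le> \<bar>u \<phi> - \<mu> \<phi>\<bar> + t * \<bar>v \<phi>\<bar>"
        unfolding nu_eq using abs_triangle_ineq[of "u \<phi> - \<mu> \<phi>" "t * v \<phi>"] tpos
        by (simp add: abs_mult algebra_simps)
      also have "\<dots> \<le> e/3 + t * V"
        using hu[OF ph] vle[OF ph] tpos by (intro add_mono mult_left_mono) (auto simp: abs_minus_commute)
      also have "\<dots> \<le> e/3 + e/3" using tV by simp
      finally show "\<bar>\<nu> \<phi> - \<mu> \<phi>\<bar> \<le> e/3 + e/3" .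
    qed
    then show ?thesis using e by simp
  qed
  define K where "K = (\<lambda>C. \<bar>\<Sum>k\<in>C. c k\<bar>) ` {C. C \<subseteq> S \<and> (\<Sum>k\<in>C. b k) \<noteq> 0}"
  define \<kappa> where "\<kappa> = Min (insert 1 K)"
  have finK: "finite K" unfolding K_def using fin by simp
  have Kpos: "\<And>y. y \<in> K \<Longrightarrow> y > 0"
  proof -
    fix y assume "y \<in> K"
    then obtain C where C: "C \<subseteq> S" "(\<Sum>k\<in>C. b k) \<noteq> 0" and y: "y = \<bar>\<Sum>k\<in>C. c k\<bar>"
      unfolding K_def by blast
    have "t \<noteq> - (\<Sum>k\<in>C. a k) / (\<Sum>k\<in>C. b k)" using t(2) C unfolding Bad_def by blast
    have "(\<Sum>k\<in>C. a k) + t * (\<Sum>k\<in>C. b k) \<noteq> 0"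
    proof
      assume h: "(\<Sum>k\<in>C. a k) + t * (\<Sum>k\<in>C. b k) = 0"
      then have "t * (\<Sum>k\<in>C. b k) = - (\<Sum>k\<in>C. a k)" by linarith
      then have "t = - (\<Sum>k\<in>C. a k) / (\<Sum>k\<in>C. b k)" using C(2) by (simp add: field_simps)
      then show False using \<open>t \<noteq> - (\<Sum>k\<in>C. a k) / (\<Sum>k\<in>C. b k)\<close> by simp
    qed
    then show "y > 0" unfolding y c_def by (simp add: sum.distrib sum_distrib_left)
  qed
  have kpos: "\<kappa> > 0" unfolding \<kappa>_def using finK Kpos by (simp add: Min_gr_iff)
  have hk: "\<And>C. C \<subseteq> S \<Longrightarrow> (\<Sum>k\<in>C. b k) \<noteq> 0 \<Longrightarrow> \<kappa> \<le> \<bar>\<Sum>k\<in>C. c k\<bar>"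
    unfolding \<kappa>_def K_def using finK K_def by (intro Min_le) auto
  define m where "m = (card S + 1)^2"
  define W where "W = (\<Sum>k\<in>S. \<bar>b k\<bar>)"
  have Tnu: "(T ^^ n) \<nu> = (\<lambda>\<phi>. \<Sum>x\<in>S. c x * delta z ((f ^^ n) x) \<phi>)" for n
    unfolding \<nu>_def using T_pow_sum[OF lin fin, of n c id] by simp
  have Tv: "(T ^^ n) v = (\<lambda>\<phi>. \<Sum>x\<in>S. b x * delta z ((f ^^ n) x) \<phi>)" for n
    unfolding v2 using T_pow_sum[OF lin fin, of n b id] by simp
  have vlim: "filterlim (\<lambda>n. dnorm z ((T ^^ n) v)) at_top sequentially"
    using vA unfolding A_set_def by blast
  have "filterlim (\<lambda>n. dnorm z ((T ^^ n) \<nu>)) at_top sequentially"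
    unfolding filterlim_at_top
  proof
    fix Z :: real
    define R where "R = max 1 (Z / \<kappa>)"
    have R: "R > 0" unfolding R_def by simp
    have ZR: "Z \<le> \<kappa> * R"
    proof -
      have "Z / \<kappa> \<le> R" unfolding R_def by simp
      then have "\<kappa> * (Z / \<kappa>) \<le> \<kappa> * R" using kpos by (intro mult_left_mono) auto
      then show ?thesis using kpos by simp
    qed
    have "eventually (\<lambda>n. 2^m * R * W + 1 \<le> dnorm z ((T ^^ n) v)) sequentially"
      using vlim unfolding filterlim_at_top by blast
    then show "eventually (\<lambda>n. Z \<le> dnorm z ((T ^^ n) \<nu>)) sequentially"
    proof (rule eventually_mono)
      fix n assume n: "2^m * R * W + 1 \<le> dnorm z ((T ^^ n) v)"
      have "\<kappa> * R \<le> dnorm z (\<lambda>\<phi>. \<Sum>k\<in>S. c k * delta z ((f ^^ n) k) \<phi>) \<or>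
         dnorm z (\<lambda>\<phi>. \<Sum>k\<in>S. b k * delta z ((f ^^ n) k) \<phi>) \<le> 2^m * R * W"
        unfolding m_def W_def by (rule key[OF fin R kpos hk])
      then show "Z \<le> dnorm z ((T ^^ n) \<nu>)" using n ZR Tnu Tv by auto
    qed
  qed
  then have "\<nu> \<in> A_set z T" using nuF unfolding A_set_def by blast
  then show ?thesis using close by blast
qed



lemma delta_Free: "delta z x \<in> Free z"
  using sum_Free[of "{x}" "\<lambda>_. 1" z id] by simp

lemma delta_span: "delta z x \<in> span_delta z"
  using sum_span[of "{x}" "\<lambda>_. 1" z id] by simp

lemma T_pow_delta:
  assumes lin: "is_lin_hat z f T"
  shows "(T ^^ n) (delta z x) = delta z ((f ^^ n) x)"
  by (induction n) (use lin in \<open>auto simp: is_lin_hat_def\<close>)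

lemma dnorm_delta_ge: "dist x z \<le> dnorm z (delta z x)"
proof -
  have ph: "(\<lambda>w. dist w z) \<in> LipBall z"
    unfolding LipBall_def
  proof safe
    show "1-lipschitz_on UNIV (\<lambda>w. dist w z)"
    proof (rule lipschitz_onI)
      fix x y :: 'a
      show "dist (dist x z) (dist y z) \<le> 1 * dist x y"
        using abs_dist_diff_le[of x z y] by (simp add: dist_real_def dist_commute)
    qed simp
  qed simp
  have bdd: "bdd_above ((\<lambda>\<phi>. \<bar>delta z x \<phi>\<bar>) ` LipBall z)"
    using sum_bdd[of "{x}" "\<lambda>_. 1" z id] by simp
  show ?thesis using dnorm_ge[OF bdd ph] delta_app[OF ph] by simp
qed

lemma part2:
  assumes lin: "is_lin_hat z f T" and mu0: "\<mu>0 \<in> Free z" and r: "r > 0"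
    and ball: "\<forall>\<nu>\<in>Free z. dnorm z (\<lambda>\<phi>. \<nu> \<phi> - \<mu>0 \<phi>) < r \<longrightarrow> \<nu> \<in> A_set z T"
  shows "\<exists>v. v \<in> span_delta z \<and> v \<in> A_set z T"
proof -
  have FF: "\<forall>e>0. \<exists>\<nu>\<in>span_delta z. \<forall>\<phi>\<in>LipBall z. \<bar>\<mu>0 \<phi> - \<nu> \<phi>\<bar> \<le> e"
    using mu0 unfolding Free_def by blast
  have r2: "r/2 > 0" using r by simp
  obtain u where us: "u \<in> span_delta z" and hu: "\<forall>\<phi>\<in>LipBall z. \<bar>\<mu>0 \<phi> - u \<phi>\<bar> \<le> r/2"
    using FF[rule_format, OF r2] by blast
  have "dnorm z (\<lambda>\<phi>. u \<phi> - \<mu>0 \<phi>) \<le> r/2"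
    by (rule dnorm_le) (use hu in \<open>auto simp: abs_minus_commute\<close>)
  then have "dnorm z (\<lambda>\<phi>. u \<phi> - \<mu>0 \<phi>) < r" using r by simp
  then have "u \<in> A_set z T" using ball span_Free[OF us] by blast
  then show ?thesis using us by blast
qed

lemma part3:
  assumes lin: "is_lin_hat z f T"
    and x: "filterlim (\<lambda>n. dist z ((f ^^ n) x)) at_top sequentially"
  shows "\<exists>v. v \<in> span_delta z \<and> v \<in> A_set z T"
proof -
  have "filterlim (\<lambda>n. dnorm z ((T ^^ n) (delta z x))) at_top sequentially"
  proof (rule filterlim_at_top_mono[OF x], rule always_eventually, rule allI)
    fix n
    show "dist z ((f ^^ n) x) \<le> dnorm z ((T ^^ n) (delta z x))"
      unfolding T_pow_delta[OF lin] using dnorm_delta_ge[of "(f ^^ n) x" z] by (simp add: dist_commute)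
  qed
  then show ?thesis using delta_span delta_Free unfolding A_set_def by blast
qed

theorem theorem5p4:
  fixes z :: "'a::metric_space" and f :: "'a \<Rightarrow> 'a"
    and T :: "(('a \<Rightarrow> real) \<Rightarrow> real) \<Rightarrow> (('a \<Rightarrow> real) \<Rightarrow> real)"
  assumes "complete (UNIV :: 'a set)"
    and "f z = z" and "\<exists>L. L-lipschitz_on UNIV f"
    and "is_lin_hat z f T"
  shows "((\<exists>v. v \<in> span_delta z \<and> v \<in> A_set z T) \<longrightarrow>
           (\<forall>\<mu>\<in>Free z. \<forall>e>0. \<exists>\<nu>\<in>A_set z T. dnorm z (\<lambda>\<phi>. \<nu> \<phi> - \<mu> \<phi>) < e))
       \<and> ((\<exists>\<mu>\<in>Free z. \<exists>r>0. \<forall>\<nu>\<in>Free z. dnorm z (\<lambda>\<phi>. \<nu> \<phi> - \<mu> \<phi>) < r \<longrightarrow> \<nu> \<in> A_set z T) \<longrightarrow>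
           (\<forall>\<mu>\<in>Free z. \<forall>e>0. \<exists>\<nu>\<in>A_set z T. dnorm z (\<lambda>\<phi>. \<nu> \<phi> - \<mu> \<phi>) < e))
       \<and> ((\<exists>x. filterlim (\<lambda>n. dist z ((f ^^ n) x)) at_top sequentially) \<longrightarrow>
           (\<forall>\<mu>\<in>Free z. \<forall>e>0. \<exists>\<nu>\<in>A_set z T. dnorm z (\<lambda>\<phi>. \<nu> \<phi> - \<mu> \<phi>) < e))"
proof -
  have lin: "is_lin_hat z f T" by fact
  have P1: "(\<exists>v. v \<in> span_delta z \<and> v \<in> A_set z T) \<Longrightarrow>
           (\<forall>\<mu>\<in>Free z. \<forall>e>0. \<exists>\<nu>\<in>A_set z T. dnorm z (\<lambda>\<phi>. \<nu> \<phi> - \<mu> \<phi>) < e)"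
  proof (intro ballI allI impI)
    fix \<mu> e assume h: "\<exists>v. v \<in> span_delta z \<and> v \<in> A_set z T" and "\<mu> \<in> Free z" "(e::real) > 0"
    from h obtain v where "v \<in> span_delta z" "v \<in> A_set z T" by blast
    then show "\<exists>\<nu>\<in>A_set z T. dnorm z (\<lambda>\<phi>. \<nu> \<phi> - \<mu> \<phi>) < e"
      using part1[OF lin] \<open>\<mu> \<in> Free z\<close> \<open>e > 0\<close> by blast
  qed
  have P2: "(\<exists>\<mu>\<in>Free z. \<exists>r>0. \<forall>\<nu>\<in>Free z. dnorm z (\<lambda>\<phi>. \<nu> \<phi> - \<mu> \<phi>) < r \<longrightarrow> \<nu> \<in> A_set z T) \<Longrightarrow>
           (\<exists>v. v \<in> span_delta z \<and> v \<in> A_set z T)"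
  proof -
    assume "\<exists>\<mu>\<in>Free z. \<exists>r>0. \<forall>\<nu>\<in>Free z. dnorm z (\<lambda>\<phi>. \<nu> \<phi> - \<mu> \<phi>) < r \<longrightarrow> \<nu> \<in> A_set z T"
    then obtain \<mu> r where "\<mu> \<in> Free z" "r > 0"
      "\<forall>\<nu>\<in>Free z. dnorm z (\<lambda>\<phi>. \<nu> \<phi> - \<mu> \<phi>) < r \<longrightarrow> \<nu> \<in> A_set z T" by blast
    then show ?thesis by (rule part2[OF lin])
  qed
  have P3: "(\<exists>x. filterlim (\<lambda>n. dist z ((f ^^ n) x)) at_top sequentially) \<Longrightarrow>
           (\<exists>v. v \<in> span_delta z \<and> v \<in> A_set z T)"
    using part3[OF lin] by blast
  show ?thesis
  proof (intro conjI impI)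
    assume h: "\<exists>v. v \<in> span_delta z \<and> v \<in> A_set z T"
    show "\<forall>\<mu>\<in>Free z. \<forall>e>0. \<exists>\<nu>\<in>A_set z T. dnorm z (\<lambda>\<phi>. \<nu> \<phi> - \<mu> \<phi>) < e" by (rule P1[OF h])
  next
    assume h: "\<exists>\<mu>\<in>Free z. \<exists>r>0. \<forall>\<nu>\<in>Free z. dnorm z (\<lambda>\<phi>. \<nu> \<phi> - \<mu> \<phi>) < r \<longrightarrow> \<nu> \<in> A_set z T"
    show "\<forall>\<mu>\<in>Free z. \<forall>e>0. \<exists>\<nu>\<in>A_set z T. dnorm z (\<lambda>\<phi>. \<nu> \<phi> - \<mu> \<phi>) < e" by (rule P1[OF P2[OF h]])
  next
    assume h: "\<exists>x. filterlim (\<lambda>n. dist z ((f ^^ n) x)) at_top sequentially"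
    show "\<forall>\<mu>\<in>Free z. \<forall>e>0. \<exists>\<nu>\<in>A_set z T. dnorm z (\<lambda>\<phi>. \<nu> \<phi> - \<mu> \<phi>) < e" by (rule P1[OF P3[OF h]])
  qed
qed


end
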